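(* Let $f$ be a DNF with $k$ terms and let $y\in\{0,1\}^n$ satisfy $f_{>\tau}$ and not $f_{\le\tau}$ ($\tau=1000k$). Fix any permutation $\pi$ and let $z_0,z_1,\dots$ be the sweep process started at $y$. Fix an index $i$ such that $(z_i)_a=y_a$ for all $a\in P(y)$, and let $U_i$ be the set of unanimous indices of $\mathcal{T}_f(z_i)$. Let $j\in[n]$ be such that some stripped term in $\mathcal{T}_f(z_i)\setminus(P(y)\cup U_i)$ contains a literal on $x_j$. Then $\pi(t)\neq j$ for all $t<i$.
   Context: Terms are sets of literals, a DNF is a set of terms; $g_{\le L}$ / $g_{>L}$ are the sub-DNFs of terms of length $\le L$ / $>L$. $\mathcal{T}_f(x)$ is the set of terms of $f$ satisfied by $x$. Protected set $P(y)$: for each term $T\in f$ not satisfied by $y$, take the literal of $T$ with smallest index not satisfied by $y$; $P(y)$ is the set of these indices. Stripped term: for a term $T$ and $S\subseteq[n]$, $T\setminus S$ removes from $T$ all literals $x_i,\overline{x_i}$ with $i\in S$; for a set of terms $\mathcal{T}$, $\mathcal{T}\setminus S=\{T\setminus S: T\in\mathcal{T}\}$. Unanimous indices of a set of terms $\mathcal{T}$: all $i\in[n]$ such that every term in $\mathcal{T}$ contains $x_i$, or every term in $\mathcal{T}$ contains $\overline{x_i}$. Sweep process: given $y$ with $f(y)=1$ and a permutation $\pi$ listing $[n]$ as $\pi(0),\dots,\pi(n-1)$, $z_0=y$, and $z_{t+1}=z_t^{\oplus\pi(t)}$ if $f(z_t^{\oplus\pi(t)})=1$, else $z_{t+1}=z_t$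 ($x^{\oplus j}$ is $x$ with bit $j$ flipped). *)

theory Defs
  imports Main
begin

text \<open>Points of {0,1}^n are
functions nat => bool (only coordinates 0..n-1 are relevant).\<close>

type_synonym lit = "nat \<times> bool"
type_synonym trm = "lit set"
type_synonym dnf = "trm set"

definition lit_sat :: "(nat \<Rightarrow> bool) \<Rightarrow> lit \<Rightarrow> bool" where
  "lit_sat x l \<longleftrightarrow> x (fst l) = snd l"

definition term_sat :: "(nat \<Rightarrow> bool) \<Rightarrow> trm \<Rightarrow> bool" where
  "term_sat x T \<longleftrightarrow> (\<forall>l\<in>T. lit_sat x l)"

definition dnf_eval :: "dnf \<Rightarrow> (nat \<Rightarrow> bool) \<Rightarrow> bool" where
  "dnf_eval f x \<longleftrightarrow> (\<exists>T\<in>f. term_sat x T)"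

definition is_dnf :: "nat \<Rightarrow> dnf \<Rightarrow> bool" where
  "is_dnf n f \<longleftrightarrow> finite f \<and> (\<forall>T\<in>f. \<forall>l\<in>T. fst l < n)"

definition term_len :: "trm \<Rightarrow> nat" where
  "term_len T = card T"

definition dnf_le :: "dnf \<Rightarrow> nat \<Rightarrow> dnf" where
  "dnf_le f L = {T\<in>f. term_len T \<le> L}"

definition dnf_gt :: "dnf \<Rightarrow> nat \<Rightarrow> dnf" where
  "dnf_gt f L = {T\<in>f. term_len T > L}"

definition sat_terms :: "dnf \<Rightarrow> (nat \<Rightarrow> bool) \<Rightarrow> trm set" where
  "sat_terms f x = {T\<in>f. term_sat x T}"

definition protected_set :: "dnf \<Rightarrow> (nat \<Rightarrow> bool) \<Rightarrow> nat set" where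
  "protected_set f y =
     {LEAST i. \<exists>b. (i, b) \<in> T \<and> \<not> lit_sat y (i, b) | T. T \<in> f \<and> \<not> term_sat y T}"

definition strip_term :: "trm \<Rightarrow> nat set \<Rightarrow> trm" where
  "strip_term T S = {l\<in>T. fst l \<notin> S}"

definition strip_terms :: "trm set \<Rightarrow> nat set \<Rightarrow> trm set" where
  "strip_terms \<T> S = (\<lambda>T. strip_term T S) ` \<T>"

definition unanimous :: "nat \<Rightarrow> trm set \<Rightarrow> nat set" where
  "unanimous n \<T> = {i. i < n \<and> ((\<forall>T\<in>\<T>. (i, True) \<in> T) \<or> (\<forall>T\<in>\<T>. (i, False) \<in> T))}"

definition flip :: "(nat \<Rightarrow> bool) \<Rightarrow> nat \<Rightarrow> (nat \<Rightarrow> bool)" where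
  "flip x j = x(j := \<not> x j)"

text \<open>Sweep process z_t for permutation \<pi> (listing [n] as \<pi> 0, ..., \<pi> (n-1)).\<close>
fun sweep :: "dnf \<Rightarrow> (nat \<Rightarrow> nat) \<Rightarrow> (nat \<Rightarrow> bool) \<Rightarrow> nat \<Rightarrow> (nat \<Rightarrow> bool)" where
  "sweep f \<pi> y 0 = y"
| "sweep f \<pi> y (Suc t) =
     (let z = sweep f \<pi> y t in
      if dnf_eval f (flip z (\<pi> t)) then flip z (\<pi> t) else z)"

end

theory Submission
  imports Defs
begin

lemma sweep_same:
  assumes "m \<le> p" "\<forall>r. m \<le> r \<and> r < p \<longrightarrow> \<pi> r \<noteq> a"
  shows "sweep f \<pi> y p a = sweep f \<pi> y m a"
  using assms
proof (induction p)
  case 0 then show ?case by simp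
next
  case (Suc p)
  show ?case
  proof (cases "m = Suc p")
    case True then show ?thesis by simp
  next
    case False
    then have "m \<le> p" using Suc.prems by simp
    then have IH: "sweep f \<pi> y p a = sweep f \<pi> y m a" using Suc by auto
    have "\<pi> p \<noteq> a" using Suc.prems \<open>m \<le> p\<close> by auto
    then show ?thesis using IH by (simp add: Let_def flip_def)
  qed
qed

theorem lemma4p8:
  fixes n k i j :: nat and f :: dnf and y :: "nat \<Rightarrow> bool" and \<pi> :: "nat \<Rightarrow> nat"
  assumes "is_dnf n f" and "card f = k"
    and "dnf_eval (dnf_gt f (1000 * k)) y"
    and "\<not> dnf_eval (dnf_le f (1000 * k)) y"
    and "bij_betw \<pi> {0..<n} {0..<n}"
    and "i \<le> n"
    and "\<forall>a\<in>protected_set f y. sweep f \<pi> y i a = y a"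
    and "\<exists>S\<in>strip_terms (sat_terms f (sweep f \<pi> y i))
            (protected_set f y \<union> unanimous n (sat_terms f (sweep f \<pi> y i))).
           \<exists>b. (j, b) \<in> S"
  shows "\<forall>t<i. \<pi> t \<noteq> j"
proof (intro allI impI notI)
  fix t assume ti: "t < i" and pj: "\<pi> t = j"
  define z where "z = sweep f \<pi> y"
  have inj: "inj_on \<pi> {0..<n}" using assms(5) bij_betw_def by blast
  have between: "z s a = y a \<or> z s a = z i a" if "s \<le> i" for s a
  proof (rule ccontr)
    assume c: "\<not> (z s a = y a \<or> z s a = z i a)"
    have "\<exists>r. 0 \<le> r \<and> r < s \<and> \<pi> r = a"
      using sweep_same[of 0 s \<pi> a f y] c z_def by auto
    then obtain r1 where r1: "r1 < s" "\<pi> r1 = a" by auto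
    have "\<exists>r. s \<le> r \<and> r < i \<and> \<pi> r = a"
      using sweep_same[of s i \<pi> a f y] c z_def that by auto
    then obtain r2 where r2: "s \<le> r2" "r2 < i" "\<pi> r2 = a" by auto
    have "r1 = r2" using inj r1 r2 that assms(6)
      by (metis atLeastLessThan_iff inj_onD le0 order_less_le_trans)
    then show False using r1 r2 by simp
  qed
  have saty: "term_sat y S" if "S \<in> sat_terms f (z i)" for S
  proof (rule ccontr)
    assume ns: "\<not> term_sat y S"
    have Sf: "S \<in> f" "term_sat (z i) S" using that by (auto simp: sat_terms_def)
    define p where "p = (LEAST i. \<exists>b. (i, b) \<in> S \<and> \<not> lit_sat y (i, b))"
    have ex: "\<exists>i b. (i, b) \<in> S \<and> \<not> lit_sat y (i, b)" using ns by (auto simp: term_sat_def)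
    have "\<exists>b. (p, b) \<in> S \<and> \<not> lit_sat y (p, b)"
      unfolding p_def using ex by (rule LeastI_ex)
    then obtain b where b: "(p, b) \<in> S" "\<not> lit_sat y (p, b)" by auto
    have "p \<in> protected_set f y" unfolding protected_set_def p_def using Sf ns by blast
    then have "z i p = y p" using assms(7) z_def by simp
    then show False using b Sf(2) by (auto simp: term_sat_def lit_sat_def)
  qed
  have satall: "term_sat (z s) S" if "S \<in> sat_terms f (z i)" "s \<le> i" for S s
  proof -
    have a: "term_sat y S" using saty that(1) by blast
    have b: "term_sat (z i) S" using that(1) by (simp add: sat_terms_def)
    show ?thesis unfolding term_sat_def lit_sat_def
      using a b between[OF that(2)] unfolding term_sat_def lit_sat_def by metis
  qed
  obtain S where S: "S \<in> strip_terms (sat_terms f (z i))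
            (protected_set f y \<union> unanimous n (sat_terms f (z i)))" "\<exists>b. (j, b) \<in> S"
    using assms(8) z_def by blast
  then obtain T b where T: "T \<in> sat_terms f (z i)" "(j, b) \<in> T"
    and jnu: "j \<notin> unanimous n (sat_terms f (z i))"
    by (auto simp: strip_terms_def strip_term_def)
  have "T \<in> f" using T by (simp add: sat_terms_def)
  then have jn: "j < n"
  proof -
    have "\<forall>T\<in>f. \<forall>l\<in>T. fst l < n" using assms(1) by (simp add: is_dnf_def)
    then have "fst (j, b) < n" using \<open>T \<in> f\<close> T(2) by blast
    then show ?thesis by simp
  qed
  have bz: "z i j = b"
  proof -
    have "term_sat (z i) T" using T(1) by (simp add: sat_terms_def)
    then have "lit_sat (z i) (j, b)" using T(2) unfolding term_sat_def by blast
    then show ?thesis by (simp add: lit_sat_def)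
  qed
  have nu: "\<not> ((\<forall>T\<in>sat_terms f (z i). (j, True) \<in> T) \<or> (\<forall>T\<in>sat_terms f (z i). (j, False) \<in> T))"
    using jnu jn unfolding unanimous_def by simp
  have "\<not> (\<forall>T\<in>sat_terms f (z i). (j, b) \<in> T)"
  proof (cases b)
    case True then show ?thesis using nu by simp
  next
    case False then show ?thesis using nu by simp
  qed
  then obtain S' where S': "S' \<in> sat_terms f (z i)" "(j, b) \<notin> S'" by blast
  have S'sat: "term_sat (z i) S'" using S'(1) by (simp add: sat_terms_def)
  have S'nj: "(j, \<not> b) \<notin> S'"
  proof
    assume "(j, \<not> b) \<in> S'"
    then have "lit_sat (z i) (j, \<not> b)" using S'sat unfolding term_sat_def by blast
    then have "z i j = (\<not> b)" by (simp add: lit_sat_def)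
    then show False using bz by simp
  qed
  have "term_sat (z t) S'" using satall S'(1) ti by simp
  then have "term_sat (flip (z t) j) S'"
  proof -
    have "\<forall>l\<in>S'. fst l \<noteq> j"
    proof
      fix l assume l: "l \<in> S'"
      obtain a c where lac: "l = (a, c)" by fastforce
      show "fst l \<noteq> j"
      proof
        assume "fst l = j"
        then have "l = (j, b) \<or> l = (j, \<not> b)" using lac by (cases c; cases b) auto
        then show False using l S'(2) S'nj by blast
      qed
    qed
    then show ?thesis using \<open>term_sat (z t) S'\<close>
      unfolding term_sat_def lit_sat_def flip_def by simp
  qed
  moreover have "S' \<in> f" using S' by (simp add: sat_terms_def)
  ultimately have ev: "dnf_eval f (flip (z t) j)" by (auto simp: dnf_eval_def)
  have zs: "z (Suc t) = flip (z t) j" using ev pj by (simp add: z_def Let_def)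
  have "term_sat (z t) T" "term_sat (z (Suc t)) T" using satall T(1) ti by auto
  then have "lit_sat (z t) (j, b)" "lit_sat (z (Suc t)) (j, b)"
    using T(2) unfolding term_sat_def by blast+
  then have "z t j = b" "z (Suc t) j = b" by (simp_all add: lit_sat_def)
  moreover have "z (Suc t) j = (\<not> z t j)" using zs by (simp add: flip_def)
  ultimately show False by simp
qed

end
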